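(* Let $(V,\le,\preccurlyeq)$ be a mixed lattice vector space whose cone $V_{sp}$ is generating ($V=V_{sp}-V_{sp}$), equipped with a vector topology $\tau$. The following are equivalent: (a) $\tau$ is locally mixed-full and the mixed lattice operations are continuous at zero; (b) for every neighborhood $U$ of zero there exists a neighborhood $W$ of zero with $W\subseteq U$ and $MS_1(W)\subseteq U$; (c) for every neighborhood $U$ of zero there exists a neighborhood $W$ of zero with $W\subseteq U$ and $MS_2(W)\subseteq U$.
   Context: A mixed lattice vector space $(V,\le,\preccurlyeq)$ is a real vector space $V$ with two partial orderings $\le$ (initial order) and $\preccurlyeq$ (specific order), each making $V$ a partially ordered vector space, with positive cones $V_p=\{x:0\le x\}$, $V_{sp}=\{x:0\preccurlyeq x\}$, such that: (1) for all $x,y$ the elements $x\curlyvee y=\min\{w: w\succcurlyeq x,\ w\ge y\}$ and $x\curlywedge y=\max\{w: w\preccurlyeq x,\ w\le y\}$ exist (min/max with respect to $\le$); (2) $x\preccurlyeq y$ implies $x\le y$; (3) $x\curlyvee y, x\curlywedge y\in V_{sp}$ whenever $x,y\in V_{sp}$. The mixed lattice operations are $(x,y)\mapsto x\curlyvee y$, $(x,y)\mapsto x\curlywedge y$; "continuous at zero" means continuous at $(0,0)$. Notation: $x^u=0\curlyvee x$, $x^l=0\curlyvee(-x)$, $s(x)=x^u+x^l$; $MS_1(A)=\{y: -s(x)\preccurlyeq y\le s(x)\text{ for some }x\in A\}$, $MS_2(A)=\{y: -s(x)\le y\preccurlyeq s(x)\text{ for some }x\in A\}$. $\tau$ is locally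 mixed-full if every neighborhood of zero contains a neighborhood $W$ of zero such that $y\in W$ and $0\preccurlyeq x\le y$ imply $x\in W$. *)

theory Defs
  imports "HOL-Analysis.Analysis"
begin

definition ordered_vs :: "('a::real_vector \<Rightarrow> 'a \<Rightarrow> bool) \<Rightarrow> bool" where
  "ordered_vs le \<longleftrightarrow>
     (\<forall>x. le x x) \<and>
     (\<forall>x y. le x y \<and> le y x \<longrightarrow> x = y) \<and>
     (\<forall>x y z. le x y \<and> le y z \<longrightarrow> le x z) \<and>
     (\<forall>x y z. le x y \<longrightarrow> le (x + z) (y + z)) \<and>
     (\<forall>x y (c::real). le x y \<and> 0 \<le> c \<longrightarrow> le (c *\<^sub>R x) (c *\<^sub>R y))"

definition is_least_wrt :: "('a \<Rightarrow> 'a \<Rightarrow> bool) \<Rightarrow> 'a set \<Rightarrow> 'a \<Rightarrow> bool" where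
  "is_least_wrt le S w \<longleftrightarrow> w \<in> S \<and> (\<forall>z\<in>S. le w z)"

definition is_greatest_wrt :: "('a \<Rightarrow> 'a \<Rightarrow> bool) \<Rightarrow> 'a set \<Rightarrow> 'a \<Rightarrow> bool" where
  "is_greatest_wrt le S w \<longleftrightarrow> w \<in> S \<and> (\<forall>z\<in>S. le z w)"

definition mup :: "('a \<Rightarrow> 'a \<Rightarrow> bool) \<Rightarrow> ('a \<Rightarrow> 'a \<Rightarrow> bool) \<Rightarrow> 'a \<Rightarrow> 'a \<Rightarrow> 'a" where
  "mup le sle x y = (THE w. is_least_wrt le {w. sle x w \<and> le y w} w)"

definition mlow :: "('a \<Rightarrow> 'a \<Rightarrow> bool) \<Rightarrow> ('a \<Rightarrow> 'a \<Rightarrow> bool) \<Rightarrow> 'a \<Rightarrow> 'a \<Rightarrow> 'a" where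
  "mlow le sle x y = (THE w. is_greatest_wrt le {w. sle w x \<and> le w y} w)"

definition mixed_lattice_vs :: "('a::real_vector \<Rightarrow> 'a \<Rightarrow> bool) \<Rightarrow> ('a \<Rightarrow> 'a \<Rightarrow> bool) \<Rightarrow> bool" where
  "mixed_lattice_vs le sle \<longleftrightarrow>
     ordered_vs le \<and> ordered_vs sle \<and>
     (\<forall>x y. \<exists>w. is_least_wrt le {w. sle x w \<and> le y w} w) \<and>
     (\<forall>x y. \<exists>w. is_greatest_wrt le {w. sle w x \<and> le w y} w) \<and>
     (\<forall>x y. sle x y \<longrightarrow> le x y) \<and>
     (\<forall>x y. sle 0 x \<and> sle 0 y \<longrightarrow> sle 0 (mup le sle x y) \<and> sle 0 (mlow le sle x y))"

definition generating_sp :: "('a::real_vector \<Rightarrow> 'a \<Rightarrow> bool) \<Rightarrow> bool" where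
  "generating_sp sle \<longleftrightarrow> (\<forall>v. \<exists>a b. sle 0 a \<and> sle 0 b \<and> v = a - b)"

definition vector_topology :: "'a::real_vector topology \<Rightarrow> bool" where
  "vector_topology T \<longleftrightarrow>
     topspace T = UNIV \<and>
     continuous_map (prod_topology T T) T (\<lambda>(x, y). x + y) \<and>
     continuous_map (prod_topology euclideanreal T) T (\<lambda>(c, x). c *\<^sub>R x)"

definition nhd0 :: "'a::zero topology \<Rightarrow> 'a set \<Rightarrow> bool" where
  "nhd0 T U \<longleftrightarrow> (\<exists>G. openin T G \<and> 0 \<in> G \<and> G \<subseteq> U)"

definition continuous_at_pt :: "'a topology \<Rightarrow> 'b topology \<Rightarrow> ('a \<Rightarrow> 'b) \<Rightarrow> 'a \<Rightarrow> bool" where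
  "continuous_at_pt S T f a \<longleftrightarrow>
     (\<forall>U. openin T U \<and> f a \<in> U \<longrightarrow> (\<exists>N. openin S N \<and> a \<in> N \<and> f ` N \<subseteq> U))"

definition locally_mixed_full :: "('a::real_vector \<Rightarrow> 'a \<Rightarrow> bool) \<Rightarrow> ('a \<Rightarrow> 'a \<Rightarrow> bool) \<Rightarrow> 'a topology \<Rightarrow> bool" where
  "locally_mixed_full le sle T \<longleftrightarrow>
     (\<forall>U. nhd0 T U \<longrightarrow> (\<exists>W. nhd0 T W \<and> W \<subseteq> U \<and>
        (\<forall>x y. y \<in> W \<and> sle 0 x \<and> le x y \<longrightarrow> x \<in> W)))"

definition mixed_ops_cont_zero :: "('a::real_vector \<Rightarrow> 'a \<Rightarrow> bool) \<Rightarrow> ('a \<Rightarrow> 'a \<Rightarrow> bool) \<Rightarrow> 'a topology \<Rightarrow> bool" where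
  "mixed_ops_cont_zero le sle T \<longleftrightarrow>
     continuous_at_pt (prod_topology T T) T (\<lambda>(x, y). mup le sle x y) (0, 0) \<and>
     continuous_at_pt (prod_topology T T) T (\<lambda>(x, y). mlow le sle x y) (0, 0)"

definition mabs :: "('a::real_vector \<Rightarrow> 'a \<Rightarrow> bool) \<Rightarrow> ('a \<Rightarrow> 'a \<Rightarrow> bool) \<Rightarrow> 'a \<Rightarrow> 'a" where
  "mabs le sle x = mup le sle 0 x + mup le sle 0 (- x)"

definition MS1 :: "('a::real_vector \<Rightarrow> 'a \<Rightarrow> bool) \<Rightarrow> ('a \<Rightarrow> 'a \<Rightarrow> bool) \<Rightarrow> 'a set \<Rightarrow> 'a set" where
  "MS1 le sle A = {y. \<exists>x\<in>A. sle (- mabs le sle x) y \<and> le y (mabs le sle x)}"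

definition MS2 :: "('a::real_vector \<Rightarrow> 'a \<Rightarrow> bool) \<Rightarrow> ('a \<Rightarrow> 'a \<Rightarrow> bool) \<Rightarrow> 'a set \<Rightarrow> 'a set" where
  "MS2 le sle A = {y. \<exists>x\<in>A. le (- mabs le sle x) y \<and> sle y (mabs le sle x)}"

end

theory Submission imports Defs begin

lemma vt_add:
  assumes vt: "vector_topology T" and G: "openin T G" "0 \<in> G"
  shows "\<exists>A B. openin T A \<and> openin T B \<and> 0 \<in> A \<and> 0 \<in> B \<and> (\<forall>a\<in>A. \<forall>b\<in>B. a + b \<in> G)"
proof -
  have c: "continuous_map (prod_topology T T) T (\<lambda>(x, y). x + y)" and ts: "topspace T = UNIV"
    using vt unfolding vector_topology_def by auto
  have "openin (prod_topology T T) {p \<in> topspace (prod_topology T T). (\<lambda>(x, y). x + y) p \<in> G}"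
    by (rule openin_continuous_map_preimage[OF c G(1)])
  hence o: "openin (prod_topology T T) {p. (\<lambda>(x, y). x + y) p \<in> G}" by (simp add: ts)
  define S where "S = {p. (\<lambda>(x, y). x + y) p \<in> G}"
  have o': "openin (prod_topology T T) S" using o unfolding S_def .
  have m: "(0,0) \<in> S" using G unfolding S_def by simp
  obtain A B where AB: "openin T A" "openin T B" "0 \<in> A" "0 \<in> B" "A \<times> B \<subseteq> S"
    using o'[unfolded openin_prod_topology_alt, rule_format, OF m] by blast
  have "\<forall>a\<in>A. \<forall>b\<in>B. a + b \<in> G"
  proof (intro ballI)
    fix a b assume "a \<in> A" "b \<in> B"
    hence "(a, b) \<in> S" using AB(5) by blast
    thus "a + b \<in> G" unfolding S_def by simp
  qed
  thus ?thesis using AB by blast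
qed

lemma vt_scale:
  assumes vt: "vector_topology T" and G: "openin T G"
  shows "openin T {x. c *\<^sub>R x \<in> G}"
proof -
  have c: "continuous_map (prod_topology euclideanreal T) T (\<lambda>(c, x). c *\<^sub>R x)" and ts: "topspace T = UNIV"
    using vt unfolding vector_topology_def by auto
  have p: "continuous_map T (prod_topology euclideanreal T) (\<lambda>x. (c, x))"
    by (intro continuous_map_pairedI) auto
  have "continuous_map T T ((\<lambda>(c, x). c *\<^sub>R x) \<circ> (\<lambda>x. (c, x)))"
    by (rule continuous_map_compose[OF p c])
  hence "continuous_map T T (\<lambda>x. c *\<^sub>R x)" by (simp add: o_def)
  from openin_continuous_map_preimage[OF this G] show ?thesis by (simp add: ts)
qed

lemma vt_sym:
  assumes vt: "vector_topology T" and G: "openin T G" "0 \<in> G"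
  shows "\<exists>V. openin T V \<and> 0 \<in> V \<and> (\<forall>a\<in>V. \<forall>b\<in>V. a + b \<in> G) \<and> (\<forall>a\<in>V. - a \<in> V) \<and> V \<subseteq> G"
proof -
  obtain A B where AB: "openin T A" "openin T B" "0 \<in> A" "0 \<in> B" "\<forall>a\<in>A. \<forall>b\<in>B. a + b \<in> G"
    using vt_add[OF vt G] by blast
  define C where "C = A \<inter> B"
  have C: "openin T C" "0 \<in> C" using AB unfolding C_def by auto
  have N: "openin T {x. (-1::real) *\<^sub>R x \<in> C}" by (rule vt_scale[OF vt C(1)])
  define V where "V = C \<inter> {x. (-1::real) *\<^sub>R x \<in> C}"
  have "openin T V" unfolding V_def using C N by auto
  moreover have "0 \<in> V" using C unfolding V_def by auto
  moreover have "\<forall>a\<in>V. \<forall>b\<in>V. a + b \<in> G" using AB unfolding V_def C_def by auto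
  moreover have "\<forall>a\<in>V. - a \<in> V" unfolding V_def by auto
  moreover have "V \<subseteq> G" using AB(4,5) unfolding V_def C_def by (metis IntD1 add_0 subsetI add.commute)
  ultimately show ?thesis by blast
qed


lemma ovs_trans: "ordered_vs r \<Longrightarrow> r x y \<Longrightarrow> r y z \<Longrightarrow> r x z"
  unfolding ordered_vs_def by blast
lemma ovs_refl: "ordered_vs r \<Longrightarrow> r x x"
  unfolding ordered_vs_def by blast
lemma ovs_antisym: "ordered_vs r \<Longrightarrow> r x y \<Longrightarrow> r y x \<Longrightarrow> x = y"
  unfolding ordered_vs_def by blast
lemma ovs_add: "ordered_vs r \<Longrightarrow> r x y \<Longrightarrow> r (x + z) (y + z)"
  unfolding ordered_vs_def by blast
lemma ovs_neg: "ordered_vs r \<Longrightarrow> r x y \<Longrightarrow> r (- y) (- x)"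
  using ovs_add[of r x y "- x - y"] by (simp add: algebra_simps)
lemma ovs_sum_pos: "ordered_vs r \<Longrightarrow> r 0 a \<Longrightarrow> r 0 b \<Longrightarrow> r 0 (a + b)"
  using ovs_add[of r 0 a b] ovs_trans[of r 0 b "a + b"] by simp
lemma ovs_sub: "ordered_vs r \<Longrightarrow> r x y \<Longrightarrow> r 0 (y - x)"
  using ovs_add[of r x y "- x"] by simp
lemma ovs_sub': "ordered_vs r \<Longrightarrow> r 0 (y - x) \<Longrightarrow> r x y"
  using ovs_add[of r 0 "y - x" x] by simp

locale mlvs =
  fixes le sle :: "'a::real_vector \<Rightarrow> 'a \<Rightarrow> bool"
  assumes ml: "mixed_lattice_vs le sle"
begin

lemma le_o: "ordered_vs le" and sle_o: "ordered_vs sle"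
  and sle_le: "sle x y \<Longrightarrow> le x y"
  using ml unfolding mixed_lattice_vs_def by auto

lemma mup_least: "is_least_wrt le {w. sle x w \<and> le y w} (mup le sle x y)"
proof -
  obtain w where w: "is_least_wrt le {w. sle x w \<and> le y w} w"
    using ml unfolding mixed_lattice_vs_def by blast
  have "(THE w. is_least_wrt le {w. sle x w \<and> le y w} w) = w"
    apply (rule the_equality)
     apply (rule w)
    using w le_o ovs_antisym unfolding is_least_wrt_def by metis
  thus ?thesis using w unfolding mup_def by simp
qed

lemma mlow_greatest: "is_greatest_wrt le {w. sle w x \<and> le w y} (mlow le sle x y)"
proof -
  obtain w where w: "is_greatest_wrt le {w. sle w x \<and> le w y} w"
    using ml unfolding mixed_lattice_vs_def by blast
  have "(THE w. is_greatest_wrt le {w. sle w x \<and> le w y} w) = w"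
    apply (rule the_equality)
     apply (rule w)
    using w le_o ovs_antisym unfolding is_greatest_wrt_def by metis
  thus ?thesis using w unfolding mlow_def by simp
qed

lemma mup1: "sle x (mup le sle x y)" and mup2: "le y (mup le sle x y)"
  and mup3: "sle x w \<Longrightarrow> le y w \<Longrightarrow> le (mup le sle x y) w"
  using mup_least[of x y] unfolding is_least_wrt_def by auto

lemma mlow1: "sle (mlow le sle x y) x" and mlow2: "le (mlow le sle x y) y"
  and mlow3: "sle w x \<Longrightarrow> le w y \<Longrightarrow> le w (mlow le sle x y)"
  using mlow_greatest[of x y] unfolding is_greatest_wrt_def by auto

lemma mup00: "mup le sle 0 0 = 0"
  using mup2[of 0 0] mup3[of 0 0 0] ovs_refl[OF sle_o] ovs_refl[OF le_o] ovs_antisym[OF le_o] by metis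

lemma mlow00: "mlow le sle 0 0 = 0"
  using mlow2[of 0 0] mlow3[of 0 0 0] ovs_refl[OF sle_o] ovs_refl[OF le_o] ovs_antisym[OF le_o] by metis

lemma mabs_pos: "sle 0 (mabs le sle x)"
  unfolding mabs_def using ovs_sum_pos[OF sle_o] mup1 by blast

lemma mabs_ge: "le x (mabs le sle x)"
proof -
  have "le 0 (mup le sle 0 (- x))" using sle_le mup1 by blast
  hence a: "le (0 + x) (mup le sle 0 (- x) + x)" by (rule ovs_add[OF le_o])
  have "le (x + mup le sle 0 (- x)) (mup le sle 0 x + mup le sle 0 (- x))"
    by (rule ovs_add[OF le_o mup2])
  with a show ?thesis unfolding mabs_def using ovs_trans[OF le_o] by (simp add: add.commute)
qed

lemma mabs_neg: "mabs le sle (- x) = mabs le sle x"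
  unfolding mabs_def by (simp add: add.commute)

lemma mabs_ge': "le (- x) (mabs le sle x)"
  using mabs_ge[of "- x"] mabs_neg by simp

lemma neg_mabs_sle: "sle (- mabs le sle x) 0"
  using ovs_neg[OF sle_o mabs_pos] by simp

lemma MS2_iff: "y \<in> MS2 le sle W \<longleftrightarrow> - y \<in> MS1 le sle W"
  unfolding MS1_def MS2_def
  using ovs_neg[OF le_o] ovs_neg[OF sle_o] by (smt (verit) mem_Collect_eq minus_minus)

lemma mup_decomp: "mup le sle x y - x \<in> MS1 le sle {y - x}"
proof -
  let ?m = "mup le sle x y" and ?s = "mabs le sle (y - x)"
  have "sle 0 (?m - x)" by (rule ovs_sub[OF sle_o mup1])
  hence A: "sle (- ?s) (?m - x)" using neg_mabs_sle ovs_trans[OF sle_o] by blast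
  have "sle x (x + ?s)" using ovs_add[OF sle_o mabs_pos[of "y - x"], of x] by (simp add: add.commute)
  moreover have "le y (x + ?s)" using ovs_add[OF le_o mabs_ge[of "y - x"], of x] by (simp add: add.commute)
  ultimately have "le ?m (x + ?s)" by (rule mup3)
  hence "le (?m - x) ?s" using ovs_add[OF le_o, of ?m "x + ?s" "- x"] by simp
  with A show ?thesis unfolding MS1_def by auto
qed

lemma mlow_decomp: "x - mlow le sle x y \<in> MS1 le sle {x - y}"
proof -
  let ?m = "mlow le sle x y" and ?s = "mabs le sle (x - y)"
  have "sle 0 (x - ?m)" by (rule ovs_sub[OF sle_o mlow1])
  hence A: "sle (- ?s) (x - ?m)" using neg_mabs_sle ovs_trans[OF sle_o] by blast
  have "sle (x - ?s) x" using ovs_add[OF sle_o mabs_pos[of "x - y"], of "x - ?s"] by simp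
  moreover have "le (x - ?s) y" using ovs_add[OF le_o mabs_ge[of "x - y"], of "y - ?s"] by simp
  ultimately have "le (x - ?s) ?m" by (rule mlow3)
  hence "le (x - ?m) ?s" using ovs_add[OF le_o, of "x - ?s" ?m "?s - ?m"] by simp
  with A show ?thesis unfolding MS1_def by auto
qed

end
lemma nhd0_open: "openin T V \<Longrightarrow> 0 \<in> V \<Longrightarrow> nhd0 T V"
  unfolding nhd0_def by blast

lemma MS1_mono: "a \<in> W \<Longrightarrow> MS1 le sle {a} \<subseteq> MS1 le sle W"
  unfolding MS1_def by auto

theorem theorem3p15:
  fixes le sle :: "'a::real_vector \<Rightarrow> 'a \<Rightarrow> bool" and T :: "'a topology"
  assumes "mixed_lattice_vs le sle"
    and "generating_sp sle"
    and "vector_topology T"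
  shows "((locally_mixed_full le sle T \<and> mixed_ops_cont_zero le sle T)
           \<longleftrightarrow> (\<forall>U. nhd0 T U \<longrightarrow> (\<exists>W. nhd0 T W \<and> W \<subseteq> U \<and> MS1 le sle W \<subseteq> U)))
       \<and> ((\<forall>U. nhd0 T U \<longrightarrow> (\<exists>W. nhd0 T W \<and> W \<subseteq> U \<and> MS1 le sle W \<subseteq> U))
           \<longleftrightarrow> (\<forall>U. nhd0 T U \<longrightarrow> (\<exists>W. nhd0 T W \<and> W \<subseteq> U \<and> MS2 le sle W \<subseteq> U)))"
proof -
  interpret mlvs le sle using assms(1) by unfold_locales
  note vt = assms(3)
  have ts: "topspace T = UNIV" using vt unfolding vector_topology_def by simp
  define B where "B = (\<forall>U. nhd0 T U \<longrightarrow> (\<exists>W. nhd0 T W \<and> W \<subseteq> U \<and> MS1 le sle W \<subseteq> U))"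
  define C where "C = (\<forall>U. nhd0 T U \<longrightarrow> (\<exists>W. nhd0 T W \<and> W \<subseteq> U \<and> MS2 le sle W \<subseteq> U))"
  have MS1_iff: "y \<in> MS1 le sle W \<longleftrightarrow> - y \<in> MS2 le sle W" for y W
    using MS2_iff[of "- y" W] by simp
  have BC: "B \<Longrightarrow> C"
    unfolding B_def C_def
  proof (intro allI impI)
    fix U assume hB: "\<forall>U. nhd0 T U \<longrightarrow> (\<exists>W. nhd0 T W \<and> W \<subseteq> U \<and> MS1 le sle W \<subseteq> U)"
      and U: "nhd0 T U"
    obtain G where G: "openin T G" "0 \<in> G" "G \<subseteq> U" using U unfolding nhd0_def by blast
    obtain V where V: "openin T V" "0 \<in> V" "\<forall>a\<in>V. - a \<in> V" "V \<subseteq> G"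
      using vt_sym[OF vt G(1,2)] by blast
    obtain W where W: "nhd0 T W" "W \<subseteq> V" "MS1 le sle W \<subseteq> V"
      using hB nhd0_open[OF V(1,2)] by blast
    have "MS2 le sle W \<subseteq> V"
    proof
      fix y assume "y \<in> MS2 le sle W"
      hence "- y \<in> V" using MS2_iff W(3) by blast
      thus "y \<in> V" using V(3) by force
    qed
    thus "\<exists>W. nhd0 T W \<and> W \<subseteq> U \<and> MS2 le sle W \<subseteq> U" using W V G by blast
  qed
  have CB: "C \<Longrightarrow> B"
    unfolding B_def C_def
  proof (intro allI impI)
    fix U assume hB: "\<forall>U. nhd0 T U \<longrightarrow> (\<exists>W. nhd0 T W \<and> W \<subseteq> U \<and> MS2 le sle W \<subseteq> U)"
      and U: "nhd0 T U"
    obtain G where G: "openin T G" "0 \<in> G" "G \<subseteq> U" using U unfolding nhd0_def by blast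
    obtain V where V: "openin T V" "0 \<in> V" "\<forall>a\<in>V. - a \<in> V" "V \<subseteq> G"
      using vt_sym[OF vt G(1,2)] by blast
    obtain W where W: "nhd0 T W" "W \<subseteq> V" "MS2 le sle W \<subseteq> V"
      using hB nhd0_open[OF V(1,2)] by blast
    have "MS1 le sle W \<subseteq> V"
    proof
      fix y assume "y \<in> MS1 le sle W"
      hence "- y \<in> V" using MS1_iff W(3) by blast
      thus "y \<in> V" using V(3) by force
    qed
    thus "\<exists>W. nhd0 T W \<and> W \<subseteq> U \<and> MS1 le sle W \<subseteq> U" using W V G by blast
  qed
  have AB: "locally_mixed_full le sle T \<Longrightarrow> mixed_ops_cont_zero le sle T \<Longrightarrow> B"
    unfolding B_def
  proof (intro allI impI)
    fix U assume full: "locally_mixed_full le sle T" and cont: "mixed_ops_cont_zero le sle T"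
      and U: "nhd0 T U"
    obtain G where G: "openin T G" "0 \<in> G" "G \<subseteq> U" using U unfolding nhd0_def by blast
    obtain V0 where V0: "openin T V0" "0 \<in> V0" "\<forall>a\<in>V0. \<forall>b\<in>V0. a + b \<in> G" "\<forall>a\<in>V0. - a \<in> V0" "V0 \<subseteq> G"
      using vt_sym[OF vt G(1,2)] by blast
    obtain W1 where W1: "nhd0 T W1" "W1 \<subseteq> V0"
      "\<And>x y. y \<in> W1 \<Longrightarrow> sle 0 x \<Longrightarrow> le x y \<Longrightarrow> x \<in> W1"
      using full nhd0_open[OF V0(1,2)] unfolding locally_mixed_full_def by blast
    obtain G1 where G1: "openin T G1" "0 \<in> G1" "G1 \<subseteq> W1" using W1(1) unfolding nhd0_def by blast
    obtain V1 where V1: "openin T V1" "0 \<in> V1" "\<forall>a\<in>V1. \<forall>b\<in>V1. a + b \<in> G1" "V1 \<subseteq> G1"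
      using vt_sym[OF vt G1(1,2)] by blast
    obtain V2 where V2: "openin T V2" "0 \<in> V2" "\<forall>a\<in>V2. \<forall>b\<in>V2. a + b \<in> V1" "V2 \<subseteq> V1"
      using vt_sym[OF vt V1(1,2)] by blast
    have "continuous_at_pt (prod_topology T T) T (\<lambda>(x, y). mup le sle x y) (0, 0)"
      using cont unfolding mixed_ops_cont_zero_def by blast
    moreover have f00: "(\<lambda>(x, y). mup le sle x y) (0, 0) \<in> V2" using V2(2) mup00 by simp
    ultimately have "\<exists>N. openin (prod_topology T T) N \<and> (0,0) \<in> N \<and>
      (\<lambda>(x, y). mup le sle x y) ` N \<subseteq> V2"
      unfolding continuous_at_pt_def using V2(1) by blast
    then obtain N where N: "openin (prod_topology T T) N" "(0,0) \<in> N"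
      "(\<lambda>(x, y). mup le sle x y) ` N \<subseteq> V2" by blast
    obtain A Bs where AB: "openin T A" "openin T Bs" "0 \<in> A" "0 \<in> Bs" "A \<times> Bs \<subseteq> N"
      using N(1,2) unfolding openin_prod_topology_alt by blast
    have mB: "x \<in> Bs \<Longrightarrow> mup le sle 0 x \<in> V2" for x
    proof -
      assume "x \<in> Bs"
      hence "(0, x) \<in> N" using AB by blast
      thus ?thesis using N(3) by force
    qed
    define W where "W = Bs \<inter> {x. - x \<in> Bs} \<inter> V0"
    have nB: "openin T {x. - x \<in> Bs}" using vt_scale[OF vt AB(2), of "-1"] by simp
    have Wo: "openin T W" unfolding W_def using AB(2) nB V0(1) by (intro openin_Int) auto
    have W0: "0 \<in> W" unfolding W_def using AB V0 by auto
    have WU: "W \<subseteq> U" unfolding W_def using V0(5) G(3) by blast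
    have "MS1 le sle W \<subseteq> U"
    proof
      fix y assume "y \<in> MS1 le sle W"
      then obtain x where x: "x \<in> W" and y1: "sle (- mabs le sle x) y" and y2: "le y (mabs le sle x)"
        unfolding MS1_def by blast
      define t where "t = mabs le sle x"
      have a: "mup le sle 0 x \<in> V2" using x mB unfolding W_def by blast
      have b: "mup le sle 0 (- x) \<in> V2" using x mB unfolding W_def by simp
      have tV1: "t \<in> V1" using a b V2(3) unfolding t_def mabs_def by blast
      have tt: "t + t \<in> G1"
      proof -
        have "t + t = (mup le sle 0 x + mup le sle 0 (- x)) + (mup le sle 0 x + mup le sle 0 (- x))"
          unfolding t_def mabs_def by simp
        thus ?thesis using a b V2(3) V1(3) by metis
      qed
      have tV0: "t \<in> V0" using tV1 V1(4) G1(3) W1(2) by blast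
      define z where "z = y + t"
      have z1: "sle 0 z" using ovs_add[OF sle_o y1, of t] unfolding z_def t_def by simp
      have z2: "le z (t + t)" using ovs_add[OF le_o y2, of t] unfolding z_def t_def by simp
      have "z \<in> W1" using W1(3)[OF _ z1 z2] tt G1(3) by blast
      hence "z \<in> V0" using W1(2) by blast
      moreover have "- t \<in> V0" using tV0 V0(4) by blast
      ultimately have "z + - t \<in> G" using V0(3) by blast
      thus "y \<in> U" using G(3) unfolding z_def by auto
    qed
    thus "\<exists>W. nhd0 T W \<and> W \<subseteq> U \<and> MS1 le sle W \<subseteq> U" using nhd0_open[OF Wo W0] WU by blast
  qed
  have BA: "B \<Longrightarrow> locally_mixed_full le sle T \<and> mixed_ops_cont_zero le sle T"
  proof -
    assume hB: B
    have full: "locally_mixed_full le sle T"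
      unfolding locally_mixed_full_def
    proof (intro allI impI)
      fix U assume U: "nhd0 T U"
      obtain W where W: "nhd0 T W" "W \<subseteq> U" "MS1 le sle W \<subseteq> U" using hB U unfolding B_def by blast
      define W' where "W' = W \<union> {x. \<exists>y\<in>W. sle 0 x \<and> le x y}"
      have "nhd0 T W'" using W(1) unfolding nhd0_def W'_def by blast
      moreover have "W' \<subseteq> U"
      proof
        fix x assume "x \<in> W'"
        then consider "x \<in> W" | y where "y \<in> W" "sle 0 x" "le x y" unfolding W'_def by blast
        thus "x \<in> U"
        proof cases
          case 1 thus ?thesis using W by blast
        next
          case 2
          have "sle (- mabs le sle y) x" using ovs_trans[OF sle_o neg_mabs_sle 2(2)] .
          moreover have "le x (mabs le sle y)" using ovs_trans[OF le_o 2(3) mabs_ge] .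
          ultimately have "x \<in> MS1 le sle W" using 2(1) unfolding MS1_def by blast
          thus ?thesis using W by blast
        qed
      qed
      moreover have "\<forall>x y. y \<in> W' \<and> sle 0 x \<and> le x y \<longrightarrow> x \<in> W'"
      proof (intro allI impI)
        fix x y assume h: "y \<in> W' \<and> sle 0 x \<and> le x y"
        then consider "y \<in> W" | y0 where "y0 \<in> W" "le y y0" unfolding W'_def by blast
        thus "x \<in> W'"
        proof cases
          case 1 thus ?thesis using h unfolding W'_def by blast
        next
          case 2
          have "le x y0" using ovs_trans[OF le_o _ 2(2)] h by blast
          thus ?thesis using h 2(1) unfolding W'_def by blast
        qed
      qed
      ultimately show "\<exists>W. nhd0 T W \<and> W \<subseteq> U \<and> (\<forall>x y. y \<in> W \<and> sle 0 x \<and> le x y \<longrightarrow> x \<in> W)"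
        by blast
    qed
    have key: "\<exists>V2. openin T V2 \<and> 0 \<in> V2 \<and> (\<forall>x\<in>V2. \<forall>y\<in>V2. mup le sle x y \<in> U \<and> mlow le sle x y \<in> U)"
      if U: "openin T U" "0 \<in> U" for U
    proof -
      obtain V1 where V1: "openin T V1" "0 \<in> V1" "\<forall>a\<in>V1. \<forall>b\<in>V1. a + b \<in> U" "\<forall>a\<in>V1. - a \<in> V1"
        using vt_sym[OF vt U] by blast
      obtain W where W: "nhd0 T W" "W \<subseteq> V1" "MS1 le sle W \<subseteq> V1"
        using hB nhd0_open[OF V1(1,2)] unfolding B_def by blast
      obtain G2 where G2: "openin T G2" "0 \<in> G2" "G2 \<subseteq> W" using W(1) unfolding nhd0_def by blast
      obtain V2 where V2: "openin T V2" "0 \<in> V2" "\<forall>a\<in>V2. \<forall>b\<in>V2. a + b \<in> G2"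
        "\<forall>a\<in>V2. - a \<in> V2" "V2 \<subseteq> G2"
        using vt_sym[OF vt G2(1,2)] by blast
      have "\<forall>x\<in>V2. \<forall>y\<in>V2. mup le sle x y \<in> U \<and> mlow le sle x y \<in> U"
      proof (intro ballI conjI)
        fix x y assume x: "x \<in> V2" and y: "y \<in> V2"
        have xV1: "x \<in> V1" using x V2(5) G2(3) W(2) by blast
        have "y + - x \<in> W" using V2(3,4) x y G2(3) by blast
        hence "mup le sle x y - x \<in> V1" using mup_decomp[of x y] MS1_mono[of "y - x" W] W(3) by auto
        hence "x + (mup le sle x y - x) \<in> U" using V1(3) xV1 by blast
        thus "mup le sle x y \<in> U" by simp
        have "x + - y \<in> W" using V2(3,4) x y G2(3) by blast
        hence "x - mlow le sle x y \<in> V1" using mlow_decomp[of x y] MS1_mono[of "x - y" W] W(3) by auto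
        hence "- (x - mlow le sle x y) \<in> V1" using V1(4) by blast
        hence "x + - (x - mlow le sle x y) \<in> U" using V1(3) xV1 by blast
        thus "mlow le sle x y \<in> U" by simp
      qed
      thus ?thesis using V2 by blast
    qed
    have cont: "mixed_ops_cont_zero le sle T"
      unfolding mixed_ops_cont_zero_def continuous_at_pt_def
    proof (intro conjI allI impI)
      fix U assume U: "openin T U \<and> (\<lambda>(x, y). mup le sle x y) (0, 0) \<in> U"
      then obtain V2 where V2: "openin T V2" "0 \<in> V2" "\<forall>x\<in>V2. \<forall>y\<in>V2. mup le sle x y \<in> U"
        using key[of U] mup00 by auto
      show "\<exists>N. openin (prod_topology T T) N \<and> (0, 0) \<in> N \<and> (\<lambda>(x, y). mup le sle x y) ` N \<subseteq> U"
        by (rule exI[of _ "V2 \<times> V2"]) (use V2 in \<open>auto simp: openin_prod_Times_iff\<close>)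
    next
      fix U assume U: "openin T U \<and> (\<lambda>(x, y). mlow le sle x y) (0, 0) \<in> U"
      then obtain V2 where V2: "openin T V2" "0 \<in> V2" "\<forall>x\<in>V2. \<forall>y\<in>V2. mlow le sle x y \<in> U"
        using key[of U] mlow00 by auto
      show "\<exists>N. openin (prod_topology T T) N \<and> (0, 0) \<in> N \<and> (\<lambda>(x, y). mlow le sle x y) ` N \<subseteq> U"
        by (rule exI[of _ "V2 \<times> V2"]) (use V2 in \<open>auto simp: openin_prod_Times_iff\<close>)
    qed
    show ?thesis using full cont by blast
  qed
  have e: "(locally_mixed_full le sle T \<and> mixed_ops_cont_zero le sle T \<longleftrightarrow> B) \<and> (B \<longleftrightarrow> C)"
    using AB BA BC CB by blast
  show ?thesis using e unfolding B_def C_def .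
qed

end
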